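(* If there exists an $(N,NK,M,R)$ $\mathcal D_{RS}$-non-private scheme, then there exists an $(N,K,M,R)$-private scheme.
   Context: Files $W_0,\dots,W_{N-1}$ independent, each uniform on $[2^F]=\{0,\dots,2^F-1\}$, $\bar W=(W_0,\dots,W_{N-1})$; $[n]=\{0,\dots,n-1\}$. Non-private scheme for $N$ files and $L$ users with memory $M$ and rate $R$: cache encoders $C_j:[2^F]^N\to[2^{MF}]$ ($j\in[L]$), transmission encoder $E:[2^F]^N\times[N]^L\to[2^{RF}]$ (the demand vector is also transmitted), and decoders $G_j$ with $W_{d_j}=G_j(\bar d,E(\bar W,\bar d),C_j(\bar W))$. For a subset $\mathcal D\subseteq[N]^L$ of demand vectors, a $\mathcal D$-non-private scheme is one for which this decoding condition holds for all $\bar W$ and all $\bar d\in\mathcal D$. Restricted demand subset $\mathcal D_{RS}$ for $N$ files and $L=NK$ users: writing $\bar d\in[N]^{NK}$ as $K$ consecutive blocks $(\bar d^{(0)},\dots,\bar d^{(K-1)})$ of length $N$, $\mathcal D_{RS}$ is the set of all $\bar d$ such that each block $\bar d^{(i)}$ is a cyclic shift of $(0,1,\dots,N-1)$. Private scheme $(N,K,M,R)$: $K$ users with independent uniform demands $D_k\in[N]$, $\bar D=(D_0,\dots,D_{K-1})$, $\tilde D_k$ = all demands except $D_k$; user $k$ shares a key $S_k$ (finite alphabet) with the server, server private randomness $P$ (finite alphabet), all of $P$, $S_k$, $D_k$, $W_i$ mutually independent; cache $Z_k=(C_k(S_k,P,\bar W),S_k)$ with $C_k$ valued in $[2^{MF}]$;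 broadcast $X=(E(\bar W,\bar D,P,\bar S),J(\bar D,P,\bar S))$ with $E$ valued in $[2^{RF}]$ and $J$ valued in a finite set whose $\log_2$-size is negligible compared to $F$; user $k$ recovers $W_{D_k}$ exactly from $(D_k,S_k,X,Z_k)$; and $I(\tilde D_k;Z_k,X,D_k)=0$ for all $k$. *)

theory Defs
  imports "HOL-Probability.Probability"
begin

definition files :: "nat \<Rightarrow> nat \<Rightarrow> nat list set" where
  "files N F = {ws. length ws = N \<and> (\<forall>w\<in>set ws. w < 2 ^ F)}"

definition demands :: "nat \<Rightarrow> nat \<Rightarrow> nat list set" where
  "demands N L = {ds. length ds = L \<and> (\<forall>d\<in>set ds. d < N)}"

definition D_RS :: "nat \<Rightarrow> nat \<Rightarrow> nat list set" where
  "D_RS N K = {ds. length ds = N * K \<and>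
     (\<forall>i<K. \<exists>s. take N (drop (i * N) ds) = rotate s [0..<N])}"

text \<open>A D-non-private scheme for N files, L users, memory M and rate R, with file size F bits.
  C j W is the cache of user j, E W d the transmission, G j d x z the decoder of user j.\<close>
definition nonprivate_scheme ::
  "nat list set \<Rightarrow> nat \<Rightarrow> nat \<Rightarrow> real \<Rightarrow> real \<Rightarrow> nat \<Rightarrow> bool" where
  "nonprivate_scheme DS N L M R F \<longleftrightarrow>
    (\<exists>(C :: nat \<Rightarrow> nat list \<Rightarrow> nat) (E :: nat list \<Rightarrow> nat list \<Rightarrow> nat)
       (G :: nat \<Rightarrow> nat list \<Rightarrow> nat \<Rightarrow> nat \<Rightarrow> nat).
       (\<forall>j<L. \<forall>W\<in>files N F. real (C j W) < 2 powr (M * real F)) \<and>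
       (\<forall>W\<in>files N F. \<forall>d\<in>demands N L. real (E W d) < 2 powr (R * real F)) \<and>
       (\<forall>j<L. \<forall>W\<in>files N F. \<forall>d\<in>DS. G j d (E W d) (C j W) = W ! (d ! j)))"

text \<open>Joint distribution of (files, demands, server randomness P, keys S_0..S_{K-1}):
  files i.i.d. uniform on [2^F], demands i.i.d. uniform on [N], P ~ pP, S_k ~ pS k,
  all mutually independent.\<close>
definition joint_pmf ::
  "nat \<Rightarrow> nat \<Rightarrow> nat \<Rightarrow> nat pmf \<Rightarrow> (nat \<Rightarrow> nat pmf) \<Rightarrow>
   (nat list \<times> nat list \<times> nat \<times> nat list) pmf" where
  "joint_pmf N K F pP pS =
     bind_pmf (pmf_of_set (files N F)) (\<lambda>W.
     bind_pmf (pmf_of_set (demands N K)) (\<lambda>D.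
     bind_pmf pP (\<lambda>p.
     bind_pmf (map_pmf (\<lambda>f. map f [0..<K]) (Pi_pmf {..<K} 0 pS)) (\<lambda>S.
     return_pmf (W, D, p, S)))))"

definition other_demands :: "nat \<Rightarrow> nat \<Rightarrow> nat list \<Rightarrow> nat list" where
  "other_demands K k D = map (\<lambda>i. D ! i) (filter (\<lambda>i. i \<noteq> k) [0..<K])"

text \<open>An (N,K,M,R)-private scheme with file size F, in which the auxiliary transmission J
  takes values in the finite set [c] (the bound c will be independent of F, so that
  log2 c is negligible compared to F).
  C k s p W : cache content of user k (key s, server randomness p);
  E W D p S : main transmission; J D p S : auxiliary transmission;
  G k d s x z : decoder of user k from (D_k, S_k, X, Z_k).\<close>
definition private_scheme ::
  "nat \<Rightarrow> nat \<Rightarrow> real \<Rightarrow> real \<Rightarrow> nat \<Rightarrow> nat \<Rightarrow> bool" where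
  "private_scheme N K M R F c \<longleftrightarrow>
    (\<exists>(pP :: nat pmf) (pS :: nat \<Rightarrow> nat pmf)
       (C :: nat \<Rightarrow> nat \<Rightarrow> nat \<Rightarrow> nat list \<Rightarrow> nat)
       (E :: nat list \<Rightarrow> nat list \<Rightarrow> nat \<Rightarrow> nat list \<Rightarrow> nat)
       (J :: nat list \<Rightarrow> nat \<Rightarrow> nat list \<Rightarrow> nat)
       (G :: nat \<Rightarrow> nat \<Rightarrow> nat \<Rightarrow> nat \<times> nat \<Rightarrow> nat \<times> nat \<Rightarrow> nat).
       finite (set_pmf pP) \<and> (\<forall>k<K. finite (set_pmf (pS k))) \<and>
       (let \<Omega> = joint_pmf N K F pP pS;
            Z = (\<lambda>k (W, D, p, S). (C k (S ! k) p W, S ! k));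
            X = (\<lambda>(W, D, p, S). (E W D p S, J D p S))
        in
         (\<forall>k<K. \<forall>(W, D, p, S)\<in>set_pmf \<Omega>. real (C k (S ! k) p W) < 2 powr (M * real F)) \<and>
         (\<forall>(W, D, p, S)\<in>set_pmf \<Omega>. real (E W D p S) < 2 powr (R * real F)) \<and>
         (\<forall>(W, D, p, S)\<in>set_pmf \<Omega>. J D p S < c) \<and>
         (\<forall>k<K. \<forall>(W, D, p, S)\<in>set_pmf \<Omega>.
             G k (D ! k) (S ! k) (X (W, D, p, S)) (Z k (W, D, p, S)) = W ! (D ! k)) \<and>
         (\<forall>k<K. prob_space.mutual_information (measure_pmf \<Omega>) 2
             (count_space UNIV) (count_space UNIV)
             (\<lambda>(W, D, p, S). other_demands K k D)
             (\<lambda>\<omega>. (Z k \<omega>, X \<omega>, fst (snd \<omega>) ! k)) = 0)))"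

end

theory Submission
  imports Defs
begin


lemma pair_measure_pmf:
  fixes P :: "'a::countable pmf" and Q :: "'b::countable pmf"
  shows "measure_pmf P \<Otimes>\<^sub>M measure_pmf Q = measure_pmf (pair_pmf P Q)"
proof (rule pair_measure_eqI)
  show "sigma_finite_measure (measure_pmf P)" "sigma_finite_measure (measure_pmf Q)"
    by (simp_all add: prob_space_imp_sigma_finite prob_space_measure_pmf)
  have "sets (measure_pmf P \<Otimes>\<^sub>M measure_pmf Q) = sets (count_space (UNIV::'a set) \<Otimes>\<^sub>M count_space (UNIV::'b set))"
    by (intro sets_pair_measure_cong) auto
  also have "\<dots> = sets (count_space UNIV)"
    by (subst pair_measure_countable) auto
  finally show "sets (measure_pmf P \<Otimes>\<^sub>M measure_pmf Q) = sets (measure_pmf (pair_pmf P Q))" by simp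
  fix A B assume "A \<in> sets (measure_pmf P)" "B \<in> sets (measure_pmf Q)"
  show "emeasure (measure_pmf P) A * emeasure (measure_pmf Q) B = emeasure (measure_pmf (pair_pmf P Q)) (A \<times> B)"
    by (simp add: measure_pmf.emeasure_eq_measure measure_pmf_prob_product ennreal_mult)
qed

lemma mi_zero:
  fixes \<Omega> :: "'c pmf" and A :: "'c \<Rightarrow> 'a::countable" and B :: "'c \<Rightarrow> 'b::countable"
  assumes H: "map_pmf (\<lambda>\<omega>. (A \<omega>, B \<omega>)) \<Omega> = pair_pmf (map_pmf A \<Omega>) (map_pmf B \<Omega>)"
  shows "prob_space.mutual_information (measure_pmf \<Omega>) 2 (count_space UNIV) (count_space UNIV) A B = 0"
proof -
  have cs: "count_space (UNIV::'a set) \<Otimes>\<^sub>M count_space (UNIV::'b set) = count_space UNIV"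
    by (subst pair_measure_countable) auto
  have "distr (measure_pmf \<Omega>) (count_space UNIV) A \<Otimes>\<^sub>M distr (measure_pmf \<Omega>) (count_space UNIV) B
      = distr (measure_pmf \<Omega>) (count_space UNIV \<Otimes>\<^sub>M count_space UNIV) (\<lambda>x. (A x, B x))"
    unfolding cs map_pmf_rep_eq[symmetric] H pair_measure_pmf ..
  then show ?thesis
    unfolding prob_space.mutual_information_def[OF prob_space_measure_pmf]
    by (simp add: cs map_pmf_rep_eq[symmetric] sigma_finite_measure.KL_same_eq_0 prob_space_imp_sigma_finite prob_space_measure_pmf)
qed


definition shv :: "nat \<Rightarrow> nat \<Rightarrow> nat list \<Rightarrow> nat list \<Rightarrow> nat list" where
  "shv N K D S = map (\<lambda>i. (D!i + N - S!i) mod N) [0..<K]"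

definition dbar :: "nat \<Rightarrow> nat list \<Rightarrow> nat list" where
  "dbar N T = concat (map (\<lambda>t. rotate t [0..<N]) T)"

fun enc :: "nat \<Rightarrow> nat list \<Rightarrow> nat" where
  "enc N [] = 0" | "enc N (t#T) = t + N * enc N T"

fun dec :: "nat \<Rightarrow> nat \<Rightarrow> nat \<Rightarrow> nat list" where
  "dec N n 0 = []" | "dec N n (Suc K) = n mod N # dec N (n div N) K"

lemma modid:
  fixes x y N :: nat
  assumes "x < N" "y < N"
  shows "(x + N - (x + N - y) mod N) mod N = y"
proof (cases "y \<le> x")
  case True
  have "(x + N - y) mod N = x - y"
    using assms True by (metis add.commute add_diff_assoc2 less_imp_diff_less mod_add_self2 mod_less)
  then show ?thesis using assms True by simp
next
  case False
  have "(x + N - y) mod N = x + N - y" using assms False by simp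
  then show ?thesis using assms False by simp
qed

lemma modid2:
  fixes x s N :: nat
  assumes "x < N" "s < N"
  shows "(s + (x + N - s) mod N) mod N = x"
proof -
  have "(s + (x + N - s) mod N) mod N = (s + (x + N - s)) mod N" by (simp add: mod_add_right_eq)
  also have "s + (x + N - s) = x + N" using assms by simp
  finally show ?thesis using assms by simp
qed

lemma enc_dec:
  assumes "N \<ge> 1" "\<forall>t\<in>set T. t < N"
  shows "dec N (enc N T) (length T) = T \<and> enc N T < N ^ length T"
  using assms(2)
proof (induction T)
  case Nil then show ?case by simp
next
  case (Cons t T)
  then have IH: "dec N (enc N T) (length T) = T" "enc N T < N ^ length T" and t: "t < N" by auto
  have "(t + N * enc N T) mod N = t" using t by simp
  moreover have "(t + N * enc N T) div N = enc N T" using t assms(1) by simp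
  moreover have "t + N * enc N T < N * N ^ length T"
  proof -
    have "enc N T + 1 \<le> N ^ length T" using IH(2) by simp
    then have h: "N * (enc N T + 1) \<le> N * N ^ length T" by (rule mult_le_mono2)
    have "N * (enc N T + 1) = N + N * enc N T" by (simp add: algebra_simps)
    then show ?thesis using t h by linarith
  qed
  ultimately show ?case using IH by simp
qed

lemma take_drop_concat:
  assumes "\<forall>xs\<in>set xss. length xs = N" "i < length xss"
  shows "take N (drop (i * N) (concat xss)) = xss ! i"
  using assms
proof (induction xss arbitrary: i)
  case Nil then show ?case by simp
next
  case (Cons xs xss)
  show ?case
  proof (cases i)
    case 0 then show ?thesis using Cons.prems by simp
  next
    case (Suc j)
    have "drop (i * N) (concat (xs # xss)) = drop (j * N) (concat xss)"
      using Cons.prems Suc by (simp add: add.commute)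
    then show ?thesis using Cons Suc by simp
  qed
qed

lemma dbar_props:
  assumes "N \<ge> 1" "T \<in> demands N K"
  shows "dbar N T \<in> D_RS N K" "dbar N T \<in> demands N (N * K)"
    "\<And>k s. k < K \<Longrightarrow> s < N \<Longrightarrow> dbar N T ! (k * N + s) = (s + T ! k) mod N"
proof -
  have len: "length T = K" using assms by (simp add: demands_def)
  have L: "\<forall>xs\<in>set (map (\<lambda>t. rotate t [0..<N]) T). length xs = N" by simp
  have lenD: "length (dbar N T) = N * K"
    unfolding dbar_def using len by (simp add: length_concat comp_def sum_list_triv)
  have blk: "take N (drop (i * N) (dbar N T)) = rotate (T ! i) [0..<N]" if "i < K" for i
    unfolding dbar_def using take_drop_concat[OF L] that len by simp
  show "dbar N T \<in> D_RS N K" unfolding D_RS_def using lenD blk by blast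
  show "dbar N T \<in> demands N (N * K)" unfolding demands_def dbar_def
    using lenD by (auto simp: dbar_def)
  fix k s assume "k < K" "s < N"
  have "k * N \<le> K * N" using \<open>k < K\<close> by simp
  then have "dbar N T ! (k * N + s) = take N (drop (k * N) (dbar N T)) ! s"
    using \<open>s < N\<close> lenD by (simp add: mult.commute)
  also have "\<dots> = (s + T ! k) mod N" using blk[OF \<open>k < K\<close>] \<open>s < N\<close> by (simp add: nth_rotate add.commute)
  finally show "dbar N T ! (k * N + s) = (s + T ! k) mod N" .
qed

lemma shv_in: "D \<in> demands N K \<Longrightarrow> N \<ge> 1 \<Longrightarrow> shv N K D S \<in> demands N K"
  by (auto simp: shv_def demands_def)

lemma shv_image:
  assumes "N \<ge> 1" "D \<in> demands N K"
  shows "shv N K D ` demands N K = demands N K" "inj_on (shv N K D) (demands N K)"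
proof -
  have D: "length D = K" "\<And>i. i < K \<Longrightarrow> D ! i < N" using assms by (auto simp: demands_def)
  show "inj_on (shv N K D) (demands N K)"
  proof (rule inj_onI)
    fix S S' assume S: "S \<in> demands N K" "S' \<in> demands N K" and eq: "shv N K D S = shv N K D S'"
    show "S = S'"
    proof (rule nth_equalityI)
      show "length S = length S'" using S by (simp add: demands_def)
      fix i assume "i < length S"
      then have i: "i < K" using S by (simp add: demands_def)
      have "(D!i + N - S!i) mod N = (D!i + N - S'!i) mod N"
        using eq i unfolding shv_def by (metis (no_types, lifting) diff_zero length_map length_upt nth_map nth_upt add_0 )
      then have "(D!i + N - (D!i + N - S!i) mod N) mod N = (D!i + N - (D!i + N - S'!i) mod N) mod N" by simp
      then show "S ! i = S' ! i" using modid[OF D(2)[OF i]] S i by (auto simp: demands_def)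
    qed
  qed
  show "shv N K D ` demands N K = demands N K"
  proof
    show "shv N K D ` demands N K \<subseteq> demands N K" using shv_in assms by blast
    show "demands N K \<subseteq> shv N K D ` demands N K"
    proof
      fix T assume T: "T \<in> demands N K"
      define S where "S = map (\<lambda>i. (D!i + N - T!i) mod N) [0..<K]"
      have "S \<in> demands N K" using assms by (auto simp: S_def demands_def)
      moreover have "shv N K D S = T"
      proof (rule nth_equalityI)
        show "length (shv N K D S) = length T" using T by (simp add: shv_def demands_def)
        fix i assume "i < length (shv N K D S)"
        then have i: "i < K" by (simp add: shv_def)
        show "shv N K D S ! i = T ! i"
          using modid[OF D(2)[OF i], of "T!i"] T i by (auto simp: shv_def S_def demands_def)
      qed
      ultimately show "T \<in> shv N K D ` demands N K" by blast
    qed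
  qed
qed



lemma files_fin: "finite (files N F)" "files N F \<noteq> {}"
proof -
  have "files N F \<subseteq> {xs. set xs \<subseteq> {..<2^F} \<and> length xs = N}" by (auto simp: files_def)
  then show "finite (files N F)" by (rule finite_subset) (rule finite_lists_length_eq, simp)
  have "replicate N 0 \<in> files N F" by (auto simp: files_def)
  then show "files N F \<noteq> {}" by blast
qed

lemma demands_fin: "finite (demands N K)" "N \<ge> 1 \<Longrightarrow> demands N K \<noteq> {}"
proof -
  have "demands N K \<subseteq> {xs. set xs \<subseteq> {..<N} \<and> length xs = K}" by (auto simp: demands_def)
  then show "finite (demands N K)" by (rule finite_subset) (rule finite_lists_length_eq, simp)
  assume "N \<ge> 1"
  then have "replicate K 0 \<in> demands N K" by (auto simp: demands_def)
  then show "demands N K \<noteq> {}" by blast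
qed

lemma US:
  assumes "N \<ge> 1"
  shows "map_pmf (\<lambda>f. map f [0..<K]) (Pi_pmf {..<K} 0 (\<lambda>_. pmf_of_set {..<N})) = pmf_of_set (demands N K)"
proof -
  let ?P = "PiE_dflt {..<K} (0::nat) (\<lambda>_. {..<N})"
  have "Pi_pmf {..<K} 0 (\<lambda>_. pmf_of_set {..<N}) = pmf_of_set ?P"
    using assms by (intro Pi_pmf_of_set) (auto simp: lessThan_empty_iff)
  moreover have inj: "inj_on (\<lambda>f. map f [0..<K]) ?P"
  proof (rule inj_onI)
    fix f g assume "f \<in> ?P" "g \<in> ?P" "map f [0..<K] = map g [0..<K]"
    then show "f = g" by (auto simp: PiE_dflt_def fun_eq_iff map_eq_conv)
  qed
  moreover have "?P \<noteq> {}" "finite ?P" using assms by (auto simp: PiE_dflt_empty_iff lessThan_empty_iff)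
  moreover have "(\<lambda>f. map f [0..<K]) ` ?P = demands N K"
  proof
    show "(\<lambda>f. map f [0..<K]) ` ?P \<subseteq> demands N K" by (auto simp: PiE_dflt_def demands_def)
    show "demands N K \<subseteq> (\<lambda>f. map f [0..<K]) ` ?P"
    proof
      fix ds assume ds: "ds \<in> demands N K"
      define f where "f = (\<lambda>i. if i < K then ds ! i else 0)"
      have "f \<in> ?P" using ds by (auto simp: f_def PiE_dflt_def demands_def)
      moreover have "map f [0..<K] = ds" using ds by (auto simp: f_def demands_def intro!: nth_equalityI)
      ultimately show "ds \<in> (\<lambda>f. map f [0..<K]) ` ?P" by blast
    qed
  qed
  ultimately show ?thesis by (simp add: map_pmf_of_set_inj)
qed



lemma joint_eq:
  assumes "N \<ge> 1"
  shows "joint_pmf N K F (return_pmf 0) (\<lambda>_. pmf_of_set {..<N}) =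
    bind_pmf (pmf_of_set (files N F)) (\<lambda>W. bind_pmf (pmf_of_set (demands N K)) (\<lambda>D.
      bind_pmf (pmf_of_set (demands N K)) (\<lambda>S. return_pmf (W, D, 0, S))))"
  unfolding joint_pmf_def US[OF assms] by (simp add: bind_return_pmf)

lemma joint_set:
  assumes "N \<ge> 1" "(W, D, p, S) \<in> set_pmf (joint_pmf N K F (return_pmf 0) (\<lambda>_. pmf_of_set {..<N}))"
  shows "W \<in> files N F" "D \<in> demands N K" "S \<in> demands N K" "p = 0"
  using assms(2) unfolding joint_eq[OF assms(1)]
  by (auto simp: set_pmf_of_set files_fin demands_fin(1) demands_fin(2)[OF assms(1)])

lemma UD_split:
  assumes "N \<ge> 1" "k < K"
  shows "pmf_of_set (demands N K) = map_pmf (\<lambda>(y,f). map (f(k:=y)) [0..<K])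
     (pair_pmf (pmf_of_set {..<N}) (Pi_pmf ({..<K} - {k}) 0 (\<lambda>_. pmf_of_set {..<N})))"
proof -
  have "{..<K} = insert k ({..<K} - {k})" using assms by auto
  then have "Pi_pmf {..<K} 0 (\<lambda>_. pmf_of_set {..<N}) = Pi_pmf (insert k ({..<K} - {k})) 0 (\<lambda>_. pmf_of_set {..<N})"
    by simp
  also have "\<dots> = map_pmf (\<lambda>(y,f). f(k:=y)) (pair_pmf (pmf_of_set {..<N}) (Pi_pmf ({..<K} - {k}) 0 (\<lambda>_. pmf_of_set {..<N})))"
    by (rule Pi_pmf_insert) auto
  finally show ?thesis unfolding US[OF assms(1), symmetric]
    by (simp add: map_pmf_comp case_prod_unfold)
qed

lemma pair_H:
  assumes "map_pmf (\<lambda>\<omega>. (A \<omega>, B \<omega>)) \<Omega> = pair_pmf P Q"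
  shows "map_pmf (\<lambda>\<omega>. (A \<omega>, B \<omega>)) \<Omega> = pair_pmf (map_pmf A \<Omega>) (map_pmf B \<Omega>)"
proof -
  have "map_pmf A \<Omega> = map_pmf fst (map_pmf (\<lambda>\<omega>. (A \<omega>, B \<omega>)) \<Omega>)" by (simp add: map_pmf_comp)
  also have "\<dots> = P" unfolding assms by (rule map_fst_pair_pmf)
  finally have 1: "map_pmf A \<Omega> = P" .
  have "map_pmf B \<Omega> = map_pmf snd (map_pmf (\<lambda>\<omega>. (A \<omega>, B \<omega>)) \<Omega>)" by (simp add: map_pmf_comp)
  also have "\<dots> = Q" unfolding assms by (rule map_snd_pair_pmf)
  finally have 2: "map_pmf B \<Omega> = Q" .
  show ?thesis using assms 1 2 by simp
qed

lemma privacy_key: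
  fixes Cn :: "nat \<Rightarrow> nat list \<Rightarrow> nat" and En :: "nat list \<Rightarrow> nat list \<Rightarrow> nat" and F :: nat
  assumes N: "N \<ge> 1" and k: "k < K"
  defines "\<beta> \<equiv> (\<lambda>W y T. let s = (y + N - T!k) mod N in
              ((Cn (k*N+s) W, s), (En W (dbar N T), enc N T), y))"
  defines "UF \<equiv> pmf_of_set (files N F)" and "UD \<equiv> pmf_of_set (demands N K)"
    and "U1 \<equiv> pmf_of_set {..<N}" and "PiR \<equiv> Pi_pmf ({..<K} - {k}) 0 (\<lambda>_. pmf_of_set {..<N})"
  shows "map_pmf (\<lambda>(W,D,p,S). (other_demands K k D, (Cn (k*N+S!k) W, S!k),
             (En W (dbar N (shv N K D S)), enc N (shv N K D S)), D ! k))
           (joint_pmf N K F (return_pmf 0) (\<lambda>_. pmf_of_set {..<N}))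
         = pair_pmf (map_pmf (\<lambda>f. map f (filter (\<lambda>i. i \<noteq> k) [0..<K])) PiR)
             (bind_pmf UF (\<lambda>W. bind_pmf U1 (\<lambda>y. map_pmf (\<beta> W y) UD)))"
proof -
  let ?oth = "\<lambda>f. map f (filter (\<lambda>i. i \<noteq> k) [0..<K])"
  have step1: "map_pmf (\<lambda>(W,D,p,S). (other_demands K k D, (Cn (k*N+S!k) W, S!k),
             (En W (dbar N (shv N K D S)), enc N (shv N K D S)), D ! k))
           (joint_pmf N K F (return_pmf 0) (\<lambda>_. pmf_of_set {..<N}))
      = bind_pmf UF (\<lambda>W. bind_pmf UD (\<lambda>D. bind_pmf UD (\<lambda>S. return_pmf
          (other_demands K k D, (Cn (k*N+S!k) W, S!k),
             (En W (dbar N (shv N K D S)), enc N (shv N K D S)), D ! k))))"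
    unfolding joint_eq[OF N] UF_def UD_def by (simp add: map_bind_pmf)
  have inner: "bind_pmf UD (\<lambda>S. return_pmf
          (other_demands K k D, (Cn (k*N+S!k) W, S!k),
             (En W (dbar N (shv N K D S)), enc N (shv N K D S)), D ! k))
        = map_pmf (\<lambda>T. (other_demands K k D, \<beta> W (D!k) T)) UD" if D: "D \<in> demands N K" for W D
  proof -
    have "bind_pmf UD (\<lambda>S. return_pmf
          (other_demands K k D, (Cn (k*N+S!k) W, S!k),
             (En W (dbar N (shv N K D S)), enc N (shv N K D S)), D ! k))
        = bind_pmf UD (\<lambda>S. return_pmf ((\<lambda>T. (other_demands K k D, \<beta> W (D!k) T)) (shv N K D S)))"
    proof (rule bind_pmf_cong[OF refl])
      fix S assume "S \<in> set_pmf UD"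
      then have S: "S \<in> demands N K" unfolding UD_def using demands_fin[of N K] N by simp
      have Dk: "D ! k < N" "S ! k < N" using D S k by (auto simp: demands_def)
      have "shv N K D S ! k = (D!k + N - S!k) mod N" using k by (simp add: shv_def)
      then have "(D!k + N - shv N K D S ! k) mod N = S ! k" using modid[OF Dk] by simp
      then show "return_pmf (other_demands K k D, (Cn (k*N+S!k) W, S!k),
             (En W (dbar N (shv N K D S)), enc N (shv N K D S)), D ! k)
          = return_pmf ((\<lambda>T. (other_demands K k D, \<beta> W (D!k) T)) (shv N K D S))"
        unfolding \<beta>_def Let_def by simp
    qed
    also have "\<dots> = map_pmf (\<lambda>T. (other_demands K k D, \<beta> W (D!k) T)) (map_pmf (shv N K D) UD)"
      by (simp add: map_pmf_def bind_assoc_pmf bind_return_pmf)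
    also have "map_pmf (shv N K D) UD = UD"
      unfolding UD_def using shv_image[OF N D] demands_fin[of N K] N
      by (simp add: map_pmf_of_set_inj)
    finally show ?thesis .
  qed
  have step2: "bind_pmf UF (\<lambda>W. bind_pmf UD (\<lambda>D. bind_pmf UD (\<lambda>S. return_pmf
          (other_demands K k D, (Cn (k*N+S!k) W, S!k),
             (En W (dbar N (shv N K D S)), enc N (shv N K D S)), D ! k))))
     = bind_pmf UF (\<lambda>W. bind_pmf UD (\<lambda>D. map_pmf (\<lambda>T. (other_demands K k D, \<beta> W (D!k) T)) UD))"
  proof (intro bind_pmf_cong[OF refl])
    fix W D assume "D \<in> set_pmf UD"
    then have "D \<in> demands N K" unfolding UD_def using demands_fin[of N K] N by simp
    then show "bind_pmf UD (\<lambda>S. return_pmf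
          (other_demands K k D, (Cn (k*N+S!k) W, S!k),
             (En W (dbar N (shv N K D S)), enc N (shv N K D S)), D ! k))
        = map_pmf (\<lambda>T. (other_demands K k D, \<beta> W (D!k) T)) UD" by (rule inner)
  qed
  have oth: "other_demands K k (map (f(k:=y)) [0..<K]) = ?oth f" for f y
    unfolding other_demands_def by simp
  have nthk: "map (f(k:=y)) [0..<K] ! k = y" for f y using k by simp
  have step3: "bind_pmf UF (\<lambda>W. bind_pmf UD (\<lambda>D. map_pmf (\<lambda>T. (other_demands K k D, \<beta> W (D!k) T)) UD))
     = bind_pmf UF (\<lambda>W. bind_pmf U1 (\<lambda>y. bind_pmf PiR (\<lambda>f. bind_pmf UD (\<lambda>T. return_pmf (?oth f, \<beta> W y T)))))"
  proof -
    have UDs: "UD = map_pmf (\<lambda>(y,f). map (f(k:=y)) [0..<K]) (pair_pmf U1 PiR)"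
      unfolding UD_def U1_def PiR_def by (rule UD_split[OF N k])
    have "bind_pmf UF (\<lambda>W. bind_pmf UD (\<lambda>D. map_pmf (\<lambda>T. (other_demands K k D, \<beta> W (D!k) T)) UD))
      = bind_pmf UF (\<lambda>W. bind_pmf (map_pmf (\<lambda>(y,f). map (f(k:=y)) [0..<K]) (pair_pmf U1 PiR))
           (\<lambda>D. map_pmf (\<lambda>T. (other_demands K k D, \<beta> W (D!k) T)) UD))"
      by (simp only: UDs[symmetric])
    also have "\<dots> = bind_pmf UF (\<lambda>W. bind_pmf U1 (\<lambda>y. bind_pmf PiR (\<lambda>f. bind_pmf UD (\<lambda>T. return_pmf (?oth f, \<beta> W y T)))))"
      by (simp add: bind_map_pmf oth nthk pair_pmf_def bind_assoc_pmf bind_return_pmf map_pmf_def)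
    finally show ?thesis .
  qed
  have step4: "pair_pmf (map_pmf ?oth PiR) (bind_pmf UF (\<lambda>W. bind_pmf U1 (\<lambda>y. map_pmf (\<beta> W y) UD)))
     = bind_pmf UF (\<lambda>W. bind_pmf U1 (\<lambda>y. bind_pmf PiR (\<lambda>f. bind_pmf UD (\<lambda>T. return_pmf (?oth f, \<beta> W y T)))))"
    unfolding pair_pmf_def map_pmf_def
    by (simp add: bind_assoc_pmf bind_return_pmf bind_commute_pmf[of PiR])
  show ?thesis using step1 step2 step3 step4 by simp
qed

lemma idx: "k < K \<Longrightarrow> s < (N::nat) \<Longrightarrow> k * N + s < N * K"
proof -
  assume a: "k < K" "s < N"
  have "k * N + s < k * N + N" using a by simp
  also have "\<dots> = Suc k * N" by simp
  also have "\<dots> \<le> K * N" using a by (intro mult_le_mono1) simp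
  finally show ?thesis by (simp add: mult.commute)
qed

lemma private_from_np:
  fixes Cn :: "nat \<Rightarrow> nat list \<Rightarrow> nat" and En :: "nat list \<Rightarrow> nat list \<Rightarrow> nat"
    and Gn :: "nat \<Rightarrow> nat list \<Rightarrow> nat \<Rightarrow> nat \<Rightarrow> nat"
  assumes N: "N \<ge> 1"
    and hC: "\<forall>j<N*K. \<forall>W\<in>files N F. real (Cn j W) < 2 powr (M * real F)"
    and hE: "\<forall>W\<in>files N F. \<forall>d\<in>demands N (N*K). real (En W d) < 2 powr (R * real F)"
    and hG: "\<forall>j<N*K. \<forall>W\<in>files N F. \<forall>d\<in>D_RS N K. Gn j d (En W d) (Cn j W) = W ! (d ! j)"
  shows "private_scheme N K M R F (N ^ K)"
proof -
  let ?\<Omega> = "joint_pmf N K F (return_pmf 0) (\<lambda>_. pmf_of_set {..<N})"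
  have mem: "W \<in> files N F \<and> D \<in> demands N K \<and> S \<in> demands N K"
    if "(W, D, p, S) \<in> set_pmf ?\<Omega>" for W D p S
    using joint_set[OF N that] by simp
  have cache: "real (Cn (k * N + S ! k) W) < 2 powr (M * real F)"
    if "k < K" "(W, D, p, S) \<in> set_pmf ?\<Omega>" for k W D p S
  proof -
    have "S ! k < N" using mem[OF that(2)] that(1) by (auto simp: demands_def)
    then show ?thesis using hC idx[OF that(1)] mem[OF that(2)] by blast
  qed
  have trans: "real (En W (dbar N (shv N K D S))) < 2 powr (R * real F)"
    if "(W, D, p, S) \<in> set_pmf ?\<Omega>" for W D p S
    using hE mem[OF that] dbar_props(2)[OF N shv_in[OF _ N]] by blast
  have aux: "enc N (shv N K D S) < N ^ K"
    if "(W, D, p, S) \<in> set_pmf ?\<Omega>" for W D p S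
  proof -
    have "shv N K D S \<in> demands N K" using mem[OF that] shv_in N by blast
    then show ?thesis using enc_dec[OF N, of "shv N K D S"] by (auto simp: demands_def)
  qed
  have decode: "Gn (k * N + S ! k) (dbar N (dec N (enc N (shv N K D S)) K))
       (En W (dbar N (shv N K D S))) (Cn (k * N + S ! k) W) = W ! (D ! k)"
    if k: "k < K" and w: "(W, D, p, S) \<in> set_pmf ?\<Omega>" for k W D p S
  proof -
    let ?T = "shv N K D S"
    have T: "?T \<in> demands N K" using mem[OF w] shv_in N by blast
    have dT: "dec N (enc N ?T) K = ?T" using enc_dec[OF N, of ?T] T by (auto simp: demands_def)
    have lt: "D ! k < N" "S ! k < N" using mem[OF w] k by (auto simp: demands_def)
    have "Gn (k * N + S ! k) (dbar N ?T) (En W (dbar N ?T)) (Cn (k * N + S ! k) W)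
        = W ! (dbar N ?T ! (k * N + S ! k))"
      using hG idx[OF k lt(2)] mem[OF w] dbar_props(1)[OF N T] by blast
    also have "dbar N ?T ! (k * N + S ! k) = (S ! k + ?T ! k) mod N"
      using dbar_props(3)[OF N T k lt(2)] .
    also have "\<dots> = D ! k" using k modid2[OF lt] by (simp add: shv_def)
    finally show ?thesis using dT by simp
  qed
  have priv: "prob_space.mutual_information (measure_pmf ?\<Omega>) 2 (count_space UNIV) (count_space UNIV)
      (\<lambda>(W, D, p, S). other_demands K k D)
      (\<lambda>\<omega>. (case \<omega> of (W, D, p, S) \<Rightarrow> (Cn (k * N + S ! k) W, S ! k),
             case \<omega> of (W, D, p, S) \<Rightarrow> (En W (dbar N (shv N K D S)), enc N (shv N K D S)),
             fst (snd \<omega>) ! k)) = 0" if k: "k < K" for k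
  proof -
    have eqf: "(\<lambda>\<omega>. ((\<lambda>(W, D, p, S). other_demands K k D) \<omega>,
            (case \<omega> of (W, D, p, S) \<Rightarrow> (Cn (k * N + S ! k) W, S ! k),
             case \<omega> of (W, D, p, S) \<Rightarrow> (En W (dbar N (shv N K D S)), enc N (shv N K D S)),
             fst (snd \<omega>) ! k)))
       = (\<lambda>(W,D,p,S). (other_demands K k D, (Cn (k*N+S!k) W, S!k),
             (En W (dbar N (shv N K D S)), enc N (shv N K D S)), D ! k))"
      by (auto simp: fun_eq_iff)
    from privacy_key[OF N k, of Cn En F] show ?thesis
      unfolding eqf[symmetric] by (rule mi_zero[OF pair_H])
  qed
  show ?thesis
    unfolding private_scheme_def Let_def
    apply (rule exI[of _ "return_pmf 0"], rule exI[of _ "\<lambda>_. pmf_of_set {..<N}"])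
    apply (rule exI[of _ "\<lambda>k s p W. Cn (k*N+s) W"])
    apply (rule exI[of _ "\<lambda>W D p S. En W (dbar N (shv N K D S))"])
    apply (rule exI[of _ "\<lambda>D p S. enc N (shv N K D S)"])
    apply (rule exI[of _ "\<lambda>k d s xj z. Gn (k*N+s) (dbar N (dec N (snd xj) K)) (fst xj) (fst z)"])
    apply (intro conjI)
    subgoal by simp
    subgoal using N by (simp add: lessThan_empty_iff)
    subgoal using cache by auto
    subgoal using trans by auto
    subgoal using aux by auto
    subgoal using decode by auto
    subgoal using priv by blast
    done
qed


theorem theorem4:
  fixes N K :: nat and M R :: real
  assumes "N \<ge> 1"
  shows "\<exists>c::nat. \<forall>F::nat.
           nonprivate_scheme (D_RS N K) N (N * K) M R F \<longrightarrow> private_scheme N K M R F c"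
proof (intro exI[of _ "N ^ K"] allI impI)
  fix F :: nat
  assume "nonprivate_scheme (D_RS N K) N (N * K) M R F"
  then obtain Cn En Gn where
    hC: "\<forall>j<N*K. \<forall>W\<in>files N F. real (Cn j W) < 2 powr (M * real F)"
    and hE: "\<forall>W\<in>files N F. \<forall>d\<in>demands N (N*K). real (En W d) < 2 powr (R * real F)"
    and hG: "\<forall>j<N*K. \<forall>W\<in>files N F. \<forall>d\<in>D_RS N K. Gn j d (En W d) (Cn j W) = W ! (d ! j)"
    unfolding nonprivate_scheme_def by blast
  show "private_scheme N K M R F (N ^ K)"
    by (rule private_from_np[OF assms hC hE hG])
qed

end
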